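(* Let $P=\sum_{i=0}^Nq^iP_i(D)\in\mathbb{C}[q][D]$ with $D=q\frac{d}{dq}$ and $P_i\in\mathbb{C}[D]$. For $r\geq 0$ let $P^{(r)}=\sum_iq^iP_i^{(r)}(D)$, where $P_i^{(r)}$ is the $r$-th formal derivative of the polynomial $P_i$. Let $I=\sum_{i=0}^NI^ih^i$ with $I^i\in\mathbb{C}[[q]]$. Then $I$ is a perturbed solution of $P$ if and only if for every $0\leq s\leq N$ $$\frac{P^{(s)}(I^0)}{s!}+\frac{P^{(s-1)}(I^1)}{(s-1)!}+\cdots+P(I^s)=0.$$
   Context: Put $I_r=\sum_{m=0}^rI^{r-m}(q)\,t^m/m!\in\mathbb{C}[[q]][t]$. Operators in $\mathbb{C}[q][D]$ act on $\mathbb{C}[[q]][t]$ via $D(f(q)t^m)=qf'(q)t^m+mf(q)t^{m-1}$, with $q$ acting by multiplication. $I$ is a perturbed solution of $P$ if $PI_r=0$ for all $0\leq r\leq N$. *)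

theory Defs
  imports "HOL-Computational_Algebra.Computational_Algebra"
begin

text \<open>Elements of C[[q]][t] are modelled as complex fps poly (polynomials in t with
  coefficients in C[[q]]).  The operator D = q d/dq acts by
  D(f t^m) = q f'(q) t^m + m f t^(m-1).\<close>

definition opD :: "complex fps poly \<Rightarrow> complex fps poly" where
  "opD F = map_poly (\<lambda>f. fps_X * fps_deriv f) F + pderiv F"

definition apply_polyD :: "complex poly \<Rightarrow> complex fps poly \<Rightarrow> complex fps poly" where
  "apply_polyD p F = (\<Sum>k\<le>degree p. smult (fps_const (coeff p k)) ((opD ^^ k) F))"

definition applyP :: "(nat \<Rightarrow> complex poly) \<Rightarrow> nat \<Rightarrow> complex fps poly \<Rightarrow> complex fps poly" where
  "applyP Pc M F = (\<Sum>i\<le>M. smult (fps_X ^ i) (apply_polyD (Pc i) F))"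

definition Ir :: "(nat \<Rightarrow> complex fps) \<Rightarrow> nat \<Rightarrow> complex fps poly" where
  "Ir I r = (\<Sum>m\<le>r. monom (fps_const (1 / fact m) * I (r - m)) m)"

definition perturbed_solution ::
  "(nat \<Rightarrow> complex poly) \<Rightarrow> nat \<Rightarrow> (nat \<Rightarrow> complex fps) \<Rightarrow> nat \<Rightarrow> bool" where
  "perturbed_solution Pc M I N \<longleftrightarrow> (\<forall>r\<le>N. applyP Pc M (Ir I r) = 0)"

end

theory Submission imports Defs begin

definition Qop :: "complex fps poly \<Rightarrow> complex fps poly" where
  "Qop F = map_poly (\<lambda>f. fps_X * fps_deriv f) F"

definition ev :: "(complex fps poly \<Rightarrow> complex fps poly) \<Rightarrow> complex poly \<Rightarrow> complex fps poly \<Rightarrow> complex fps poly" where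
  "ev A p F = (\<Sum>k\<le>degree p. smult (fps_const (coeff p k)) ((A^^k) F))"

definition lin :: "(complex fps poly \<Rightarrow> complex fps poly) \<Rightarrow> bool" where
  "lin A \<longleftrightarrow> (\<forall>F G. A (F+G) = A F + A G) \<and> (\<forall>c F. A (smult (fps_const c) F) = smult (fps_const c) (A F))"

lemma lin_add: "lin A \<Longrightarrow> A (F+G) = A F + A G" by (simp add: lin_def)
lemma lin_smult: "lin A \<Longrightarrow> A (smult (fps_const c) F) = smult (fps_const c) (A F)" by (simp add: lin_def)
lemma lin_zero: "lin A \<Longrightarrow> A 0 = 0"
proof -
  assume "lin A"
  then have "A 0 + A 0 = A 0 + 0" using lin_add[of A 0 0] by simp
  then show ?thesis by (rule add_left_imp_eq)
qed
lemma lin_sum: "lin A \<Longrightarrow> A (sum f S) = (\<Sum>x\<in>S. A (f x))"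
  by (induction S rule: infinite_finite_induct) (simp_all add: lin_zero lin_add)
lemma lin_funpow: "lin A \<Longrightarrow> lin (A^^k)"
  by (induction k) (simp_all add: lin_def)

lemma ev_bound: "degree p \<le> K \<Longrightarrow> ev A p F = (\<Sum>k\<le>K. smult (fps_const (coeff p k)) ((A^^k) F))"
  unfolding ev_def
  by (rule sum.mono_neutral_left) (auto simp: coeff_eq_0)

lemma ev_0[simp]: "ev A 0 F = 0" by (simp add: ev_def)

lemma ev_arg0: "lin A \<Longrightarrow> ev A p 0 = 0"
  unfolding ev_def using lin_zero[OF lin_funpow] by simp

lemma ev_add: "ev A (p+q) F = ev A p F + ev A q F"
proof -
  let ?K = "max (degree p) (degree q)"
  have "degree (p+q) \<le> ?K" by (rule degree_add_le) auto
  then show ?thesis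
    by (simp add: ev_bound[of _ ?K] sum.distrib smult_add_left fps_const_add[symmetric] del: fps_const_add)
qed

lemma smult_sum_right: "smult c (sum f S) = (\<Sum>x\<in>S. smult c (f x))"
  by (induction S rule: infinite_finite_induct) (simp_all add: smult_add_right)

lemma ev_smult: "ev A (smult c p) F = smult (fps_const c) (ev A p F)"
  using ev_bound[of "smult c p" "degree p"]
  by (simp add: ev_def smult_sum_right degree_smult_le fps_const_mult[symmetric] del: fps_const_mult)

lemma ev_pCons: assumes "lin A" shows "ev A (pCons a p) F = smult (fps_const a) F + A (ev A p F)"
proof -
  have "ev A (pCons a p) F = (\<Sum>k\<le>Suc (degree p). smult (fps_const (coeff (pCons a p) k)) ((A^^k) F))"
    by (rule ev_bound) (simp add: degree_pCons_le)
  also have "\<dots> = smult (fps_const a) F + (\<Sum>k\<le>degree p. smult (fps_const (coeff p k)) (A ((A^^k) F)))"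
    by (subst sum.atMost_Suc_shift) simp
  also have "\<dots> = smult (fps_const a) F + A (ev A p F)"
    by (simp add: ev_def lin_sum[OF assms] lin_smult[OF assms])
  finally show ?thesis .
qed

lemma funpow_comm: assumes c: "\<And>G. A (B G) = B (A G)" shows "(A^^k) (B F) = B ((A^^k) F)"
proof (induction k)
  case (Suc k)
  have "(A^^Suc k) (B F) = A ((A^^k) (B F))" by simp
  also have "\<dots> = A (B ((A^^k) F))" by (simp only: Suc)
  also have "\<dots> = B ((A^^Suc k) F)" by (simp only: c funpow.simps o_apply)
  finally show ?case .
qed simp

lemma ev_comm: assumes "lin B" "\<And>G. A (B G) = B (A G)" shows "ev A p (B F) = B (ev A p F)"
  unfolding ev_def by (simp add: lin_sum[OF assms(1)] lin_smult[OF assms(1)] funpow_comm[of A B, OF assms(2)])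

lemma lin_Q: "lin Qop"
  unfolding lin_def Qop_def
  by (auto intro!: poly_eqI simp: coeff_map_poly algebra_simps)

lemma lin_pderiv: "lin pderiv"
  unfolding lin_def by (simp add: pderiv_add pderiv_smult)

lemma Q_pderiv: "Qop (pderiv F) = pderiv (Qop F)"
  unfolding Qop_def
  by (auto intro!: poly_eqI simp: coeff_map_poly coeff_pderiv fps_of_nat[symmetric] algebra_simps)

lemma opD_eq: "opD F = Qop F + pderiv F" by (simp add: opD_def Qop_def)

lemma lin_opD: "lin opD"
  using lin_Q lin_pderiv unfolding lin_def opD_eq by (simp add: algebra_simps smult_add_right)

lemma opD_pderiv: "opD (pderiv F) = pderiv (opD F)"
  by (simp add: opD_eq Q_pderiv pderiv_add)

lemma apply_polyD_ev: "apply_polyD p F = ev opD p F"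
  by (simp add: apply_polyD_def ev_def)

lemma hpderiv_pCons: "(pderiv^^Suc k) (pCons a p) = smult (of_nat (Suc k)) ((pderiv^^k) p) + pCons 0 ((pderiv^^Suc k) p)"
proof (induction k)
  case 0 then show ?case by (simp add: pderiv_pCons)
next
  case (Suc k)
  have "(pderiv^^Suc (Suc k)) (pCons a p) = pderiv ((pderiv^^Suc k) (pCons a p))" by simp
  also have "\<dots> = smult (of_nat (Suc k)) ((pderiv^^Suc k) p) + (pderiv^^Suc k) p + pCons 0 ((pderiv^^Suc (Suc k)) p)"
    by (simp only: Suc pderiv_add pderiv_smult pderiv_pCons) (simp add: algebra_simps)
  also have "\<dots> = smult (of_nat (Suc (Suc k))) ((pderiv^^Suc k) p) + pCons 0 ((pderiv^^Suc (Suc k)) p)"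
    by (simp add: algebra_simps smult_add_left)
  finally show ?case .
qed

definition tt :: "nat \<Rightarrow> complex poly \<Rightarrow> complex fps poly \<Rightarrow> complex fps poly" where
  "tt k p F = smult (fps_const (1 / fact k)) (ev Qop ((pderiv^^k) p) ((pderiv^^k) F))"

lemma tt_Suc_pCons: "tt (Suc k) (pCons a p) F = pderiv (tt k p F) + Qop (tt (Suc k) p F)"
proof -
  let ?G = "(pderiv^^Suc k) F"
  have e: "fps_const (1 / fact (Suc k)) * fps_const (of_nat (Suc k)) = fps_const (1 / fact k :: complex)"
    by (simp add: field_simps del: of_nat_Suc)
  have "tt (Suc k) (pCons a p) F = smult (fps_const (1 / fact (Suc k)))
     (smult (fps_const (of_nat (Suc k))) (ev Qop ((pderiv^^k) p) ?G) + Qop (ev Qop ((pderiv^^Suc k) p) ?G))"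
    unfolding tt_def hpderiv_pCons
    by (simp only: ev_add ev_smult ev_pCons[OF lin_Q]) simp
  also have "\<dots> = smult (fps_const (1 / fact k)) (ev Qop ((pderiv^^k) p) ?G) + Qop (tt (Suc k) p F)"
    by (simp only: smult_add_right smult_smult e tt_def lin_smult[OF lin_Q])
  also have "\<dots> = pderiv (tt k p F) + Qop (tt (Suc k) p F)"
    by (simp add: tt_def pderiv_smult ev_comm[where A=Qop and B=pderiv, OF lin_pderiv Q_pderiv])
  finally show ?thesis .
qed

lemma taylor: "degree p \<le> K \<Longrightarrow> ev opD p F = (\<Sum>k\<le>K. tt k p F)"
proof (induction p arbitrary: K F)
  case 0
  then show ?case by (simp add: tt_def)
next
  case (pCons a p)
  have split: "(\<Sum>k\<le>K. f k) = f 0 + (\<Sum>k<K. f (Suc k))" for f :: "nat \<Rightarrow> complex fps poly"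
    by (simp only: lessThan_Suc_atMost[symmetric] sum.lessThan_Suc_shift)
  have tt0: "tt 0 (pCons a p) F = smult (fps_const a) F + Qop (tt 0 p F)"
    by (simp add: tt_def ev_pCons[OF lin_Q])
  show ?case
  proof (cases "p = 0")
    case True
    have "tt (Suc k) (pCons a p) F = 0" for k
      using True by (simp add: tt_def hpderiv_pCons del: funpow.simps)
    then have z: "(\<Sum>k<K. tt (Suc k) (pCons a p) F) = 0" by simp
    have t0: "tt 0 p F = 0" using True by (simp add: tt_def)
    have "ev opD (pCons a p) F = smult (fps_const a) F"
      using True by (simp add: ev_pCons[OF lin_opD] lin_zero[OF lin_opD])
    moreover have "(\<Sum>k\<le>K. tt k (pCons a p) F) = smult (fps_const a) F"
      by (simp only: split z tt0 t0 lin_zero[OF lin_Q]) simp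
    ultimately show ?thesis by simp
  next
    case False
    then have "degree (pCons a p) = Suc (degree p)" by simp
    with pCons.prems obtain K' where K: "K = Suc K'" "degree p \<le> K'"
      by (cases K) auto
    have "ev opD (pCons a p) F = smult (fps_const a) F + Qop (ev opD p F) + pderiv (ev opD p F)"
      by (simp add: ev_pCons[OF lin_opD] opD_eq add.assoc)
    also have "\<dots> = smult (fps_const a) F + Qop (\<Sum>k\<le>Suc K'. tt k p F) + pderiv (\<Sum>k\<le>K'. tt k p F)"
      using pCons.IH[of "Suc K'" F] pCons.IH[of K' F] K by simp
    also have "\<dots> = smult (fps_const a) F + Qop (tt 0 p F) + (\<Sum>k\<le>K'. Qop (tt (Suc k) p F))
       + (\<Sum>k\<le>K'. pderiv (tt k p F))"
      by (simp del: sum.atMost_Suc add: sum.atMost_Suc_shift lin_sum[OF lin_Q] lin_sum[OF lin_pderiv] lin_add[OF lin_Q])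
    also have "\<dots> = tt 0 (pCons a p) F + (\<Sum>k\<le>K'. tt (Suc k) (pCons a p) F)"
      by (simp add: tt0 tt_Suc_pCons sum.distrib algebra_simps)
    also have "\<dots> = (\<Sum>k\<le>K. tt k (pCons a p) F)"
      by (simp del: sum.atMost_Suc add: K sum.atMost_Suc_shift)
    finally show ?thesis .
  qed
qed

definition qf :: "complex fps \<Rightarrow> complex fps" where "qf f = fps_X * fps_deriv f"

definition evq :: "complex poly \<Rightarrow> complex fps \<Rightarrow> complex fps" where
  "evq r f = (\<Sum>k\<le>degree r. fps_const (coeff r k) * (qf^^k) f)"

lemma coeff_Qop: "coeff (Qop H) n = qf (coeff H n)"
  by (simp add: Qop_def qf_def coeff_map_poly)

lemma coeff_Qpow0: "coeff ((Qop^^k) G) 0 = (qf^^k) (coeff G 0)"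
  by (induction k) (simp_all add: coeff_Qop)

lemma coeff_evQ0: "coeff (ev Qop r G) 0 = evq r (coeff G 0)"
  by (simp add: ev_def evq_def coeff_sum coeff_Qpow0)

lemma opD_const: "opD [:f:] = [:qf f:]"
  by (simp add: opD_def qf_def map_poly_pCons)

lemma opDpow_const: "(opD^^k) [:f:] = [:(qf^^k) f:]"
  by (induction k) (simp_all add: opD_const)

lemma sum_const_poly: "(\<Sum>x\<in>S. [:g x:]) = [:\<Sum>x\<in>S. g x:]"
  by (induction S rule: infinite_finite_induct) simp_all

lemma ev_opD_const: "ev opD r [:f:] = [:evq r f:]"
  by (simp add: ev_def evq_def opDpow_const sum_const_poly)

lemma applyP_const: "applyP Pc M [:f:] = [:\<Sum>i\<le>M. fps_X ^ i * evq (Pc i) f:]"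
  by (simp add: applyP_def apply_polyD_ev ev_opD_const sum_const_poly)

lemma hpderiv_zero: "degree F < k \<Longrightarrow> (pderiv^^k) F = 0"
  by (rule poly_eqI) (simp add: coeff_higher_pderiv coeff_eq_0)

lemma evq_0: "evq r 0 = 0"
proof -
  have "(qf^^k) 0 = 0" for k by (induction k) (simp_all add: qf_def)
  then show ?thesis by (simp add: evq_def)
qed

lemma taylor_trunc: assumes "degree F \<le> r" shows "ev opD p F = (\<Sum>k\<le>r. tt k p F)"
proof -
  have "ev opD p F = (\<Sum>k\<le>max (degree p) r. tt k p F)" by (rule taylor) simp
  also have "\<dots> = (\<Sum>k\<le>r. tt k p F)"
    by (rule sum.mono_neutral_right)
       (use assms in \<open>auto simp: tt_def hpderiv_zero ev_arg0[OF lin_Q]\<close>)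
  finally show ?thesis .
qed

lemma degree_Ir: "degree (Ir I r) \<le> r"
  unfolding Ir_def by (rule degree_sum_le) (auto intro: order.trans[OF degree_monom_le])

lemma coeff_Ir: "coeff (Ir I r) k = (if k \<le> r then fps_const (1 / fact k) * I (r - k) else 0)"
  by (simp add: Ir_def coeff_sum coeff_monom)

lemma coeff_hpderiv_Ir: "k \<le> r \<Longrightarrow> coeff ((pderiv^^k) (Ir I r)) 0 = I (r - k)"
proof -
  assume k: "k \<le> r"
  have "coeff ((pderiv^^k) (Ir I r)) 0 = fact k * (fps_const (1 / fact k) * I (r - k))"
    by (simp add: coeff_higher_pderiv coeff_Ir k pochhammer_fact)
  also have "(fact k :: complex fps) = fps_const (fact k)"
    by (metis fps_of_nat of_nat_fact)
  finally show ?thesis by (simp add: mult.assoc[symmetric])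
qed

lemma coeff_applyP_Ir:
  "coeff (applyP Pc M (Ir I r)) 0 =
     (\<Sum>i\<le>M. fps_X ^ i * (\<Sum>k\<le>r. fps_const (1 / fact k) * evq ((pderiv^^k) (Pc i)) (I (r - k))))"
  by (simp add: applyP_def coeff_sum apply_polyD_ev taylor_trunc[OF degree_Ir] tt_def
      coeff_evQ0 coeff_hpderiv_Ir)

lemma reindex_rev: "(\<Sum>j\<le>s. g j (s - j)) = (\<Sum>k\<le>s. g (s - k) k)" for g :: "nat \<Rightarrow> nat \<Rightarrow> complex fps"
  by (rule sum.reindex_bij_witness[where i = "\<lambda>k. s - k" and j = "\<lambda>j. s - j"]) auto

lemma C_eq:
  "(\<Sum>j\<le>s. smult (fps_const (1 / fact (s - j))) (applyP (\<lambda>i. (pderiv ^^ (s - j)) (Pc i)) M [:I j:]))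
    = [:coeff (applyP Pc M (Ir I s)) 0:]"
proof -
  have "(\<Sum>j\<le>s. smult (fps_const (1 / fact (s - j))) (applyP (\<lambda>i. (pderiv ^^ (s - j)) (Pc i)) M [:I j:]))
     = [:\<Sum>j\<le>s. \<Sum>i\<le>M. fps_const (1 / fact (s - j)) * (fps_X ^ i * evq ((pderiv ^^ (s - j)) (Pc i)) (I j)):]"
    by (simp add: applyP_const sum_const_poly sum_distrib_left)
  also have "(\<Sum>j\<le>s. \<Sum>i\<le>M. fps_const (1 / fact (s - j)) * (fps_X ^ i * evq ((pderiv ^^ (s - j)) (Pc i)) (I j)))
     = (\<Sum>k\<le>s. \<Sum>i\<le>M. fps_const (1 / fact k) * (fps_X ^ i * evq ((pderiv ^^ k) (Pc i)) (I (s - k))))"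
    using reindex_rev[of "\<lambda>j k. \<Sum>i\<le>M. fps_const (1 / fact k) * (fps_X ^ i * evq ((pderiv ^^ k) (Pc i)) (I j))" s]
    by simp
  also have "\<dots> = coeff (applyP Pc M (Ir I s)) 0"
    unfolding coeff_applyP_Ir sum_distrib_left
    by (subst sum.swap) (simp add: mult_ac)
  finally show ?thesis .
qed

lemma pderiv_applyP: "pderiv (applyP Pc M F) = applyP Pc M (pderiv F)"
  by (simp add: applyP_def lin_sum[OF lin_pderiv] pderiv_smult apply_polyD_ev
      ev_comm[where A=opD and B=pderiv, OF lin_pderiv opD_pderiv])

lemma applyP_0: "applyP Pc M 0 = 0"
  by (simp add: applyP_def apply_polyD_ev ev_arg0[OF lin_opD])

lemma pderiv_Ir_Suc: "pderiv (Ir I (Suc r)) = Ir I r"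
proof (rule poly_eqI)
  fix n
  have e: "(of_nat (Suc n) :: complex fps) * fps_const (1 / (of_nat (Suc n) * fact n)) = fps_const (1 / fact n)"
  proof -
    have "(of_nat (Suc n) :: complex fps) = fps_const (of_nat (Suc n))" by (metis fps_of_nat)
    then show ?thesis by (simp add: field_simps del: of_nat_Suc)
  qed
  show "coeff (pderiv (Ir I (Suc r))) n = coeff (Ir I r) n"
    by (simp add: coeff_pderiv coeff_Ir mult.assoc[symmetric] e del: of_nat_Suc)
qed

lemma pderiv_Ir_0: "pderiv (Ir I 0) = 0"
  using degree_Ir[of I 0] by (simp add: pderiv_eq_0_iff)

lemma zero_crit: assumes "pderiv G = 0" "coeff G 0 = 0" shows "G = (0 :: complex fps poly)"
proof (rule poly_eqI)
  fix n
  have "degree G = 0" using assms(1) by (simp add: pderiv_eq_0_iff)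
  then show "coeff G n = coeff 0 n" using assms(2) by (cases n) (simp_all add: coeff_eq_0)
qed

theorem theorem4p1:
  fixes Pc :: "nat \<Rightarrow> complex poly" and M N :: nat and I :: "nat \<Rightarrow> complex fps"
  shows "perturbed_solution Pc M I N \<longleftrightarrow>
    (\<forall>s\<le>N. (\<Sum>j\<le>s. smult (fps_const (1 / fact (s - j)))
                (applyP (\<lambda>i. (pderiv ^^ (s - j)) (Pc i)) M [:I j:])) = 0)"
proof -
  have "perturbed_solution Pc M I N \<longleftrightarrow> (\<forall>s\<le>N. coeff (applyP Pc M (Ir I s)) 0 = 0)"
  proof
    assume "perturbed_solution Pc M I N"
    then show "\<forall>s\<le>N. coeff (applyP Pc M (Ir I s)) 0 = 0"
      by (simp add: perturbed_solution_def)
  next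
    assume H: "\<forall>s\<le>N. coeff (applyP Pc M (Ir I s)) 0 = 0"
    have "r \<le> N \<longrightarrow> applyP Pc M (Ir I r) = 0" for r
    proof (induction r)
      case 0
      show ?case
      proof
        assume "0 \<le> N"
        show "applyP Pc M (Ir I 0) = 0"
        proof (rule zero_crit)
          show "pderiv (applyP Pc M (Ir I 0)) = 0"
            by (simp only: pderiv_applyP pderiv_Ir_0 applyP_0)
          show "coeff (applyP Pc M (Ir I 0)) 0 = 0" using H \<open>0 \<le> N\<close> by blast
        qed
      qed
    next
      case (Suc r)
      show ?case
      proof
        assume "Suc r \<le> N"
        show "applyP Pc M (Ir I (Suc r)) = 0"
        proof (rule zero_crit)
          show "pderiv (applyP Pc M (Ir I (Suc r))) = 0"
            using Suc.IH \<open>Suc r \<le> N\<close> by (simp only: pderiv_applyP pderiv_Ir_Suc)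
          show "coeff (applyP Pc M (Ir I (Suc r))) 0 = 0" using H \<open>Suc r \<le> N\<close> by blast
        qed
      qed
    qed
    then show "perturbed_solution Pc M I N" by (simp add: perturbed_solution_def)
  qed
  then show ?thesis by (simp add: C_eq)
qed

end
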